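(* Let $G$ be a perfectly labeled graph on $[n]$ which is crossing closed. Then $G$ is upper crossing closed with respect to the colexicographic order on $E(G)$, and also with respect to the lexicographic order on $E(G)$.
   Context: Graphs are finite simple graphs with vertex set $[n]$; edges are written $ij$ with $i<j$. Two edges $a_1a_2$ and $b_1b_2$ cross if $a_1<b_1<a_2<b_2$ or $b_1<a_1<b_2<a_2$. $G$ is perfectly labeled if whenever $ik,jk\in E(G)$ with $i<j<k$, also $ij\in E(G)$. Lexicographic order: $ab\lhd a'b'$ iff $a<a'$, or $a=a'$ and $b<b'$; colexicographic order: $ab\lhd a'b'$ iff $b<b'$, or $b=b'$ and $a<a'$. Two crossing edges $e,f$ are crossing closed if among all induced connected subgraphs of $G$ containing $e$ and $f$ there is a unique minimal one under containment, denoted $J(e,f)$; $G$ is crossing closed if all pairs of crossing edges are. $G$ is upper crossing closed with respect to a total order $\unlhd$ on $E(G)$ if it is crossing closed and for every pair of crossing edges $e,f$, $J(e,f)$ contains an edge $h$ with $h\lhd e$ and $h\lhd f$. *)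

theory Defs
  imports Main
begin

text \<open>A graph on [n] is given by its edge set; an edge ij with i<j is the pair (i,j).\<close>

definition graph_on :: "nat \<Rightarrow> (nat \<times> nat) set \<Rightarrow> bool" where
  "graph_on n E \<longleftrightarrow> E \<subseteq> {(i,j). 1 \<le> i \<and> i < j \<and> j \<le> n}"

definition crossing :: "nat \<times> nat \<Rightarrow> nat \<times> nat \<Rightarrow> bool" where
  "crossing e f \<longleftrightarrow>
     (fst e < fst f \<and> fst f < snd e \<and> snd e < snd f) \<or>
     (fst f < fst e \<and> fst e < snd f \<and> snd f < snd e)"

definition perfectly_labeled :: "(nat \<times> nat) set \<Rightarrow> bool" where
  "perfectly_labeled E \<longleftrightarrow>
     (\<forall>i j k. (i,k) \<in> E \<and> (j,k) \<in> E \<and> i < j \<and> j < k \<longrightarrow> (i,j) \<in> E)"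

definition induced_edges :: "(nat \<times> nat) set \<Rightarrow> nat set \<Rightarrow> (nat \<times> nat) set" where
  "induced_edges E S = {(a,b) \<in> E. a \<in> S \<and> b \<in> S}"

definition connected_induced :: "(nat \<times> nat) set \<Rightarrow> nat set \<Rightarrow> bool" where
  "connected_induced E S \<longleftrightarrow> S \<noteq> {} \<and>
     (\<forall>u\<in>S. \<forall>v\<in>S. (u,v) \<in> (induced_edges E S \<union> (induced_edges E S)\<inverse>)\<^sup>*)"

text \<open>Vertex sets S of induced connected subgraphs of G containing edges e and f.
  Induced subgraphs are ordered by containment exactly as their vertex sets are.\<close>
definition admissible :: "nat \<Rightarrow> (nat \<times> nat) set \<Rightarrow> nat \<times> nat \<Rightarrow> nat \<times> nat \<Rightarrow> nat set \<Rightarrow> bool" where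
  "admissible n E e f S \<longleftrightarrow> S \<subseteq> {1..n} \<and>
     fst e \<in> S \<and> snd e \<in> S \<and> fst f \<in> S \<and> snd f \<in> S \<and> connected_induced E S"

definition minimal_admissible :: "nat \<Rightarrow> (nat \<times> nat) set \<Rightarrow> nat \<times> nat \<Rightarrow> nat \<times> nat \<Rightarrow> nat set \<Rightarrow> bool" where
  "minimal_admissible n E e f S \<longleftrightarrow> admissible n E e f S \<and>
     (\<forall>T. admissible n E e f T \<and> T \<subseteq> S \<longrightarrow> T = S)"

definition crossing_closed_pair :: "nat \<Rightarrow> (nat \<times> nat) set \<Rightarrow> nat \<times> nat \<Rightarrow> nat \<times> nat \<Rightarrow> bool" where
  "crossing_closed_pair n E e f \<longleftrightarrow> (\<exists>!S. minimal_admissible n E e f S)"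

definition J_vertices :: "nat \<Rightarrow> (nat \<times> nat) set \<Rightarrow> nat \<times> nat \<Rightarrow> nat \<times> nat \<Rightarrow> nat set" where
  "J_vertices n E e f = (THE S. minimal_admissible n E e f S)"

definition crossing_closed :: "nat \<Rightarrow> (nat \<times> nat) set \<Rightarrow> bool" where
  "crossing_closed n E \<longleftrightarrow>
     (\<forall>e\<in>E. \<forall>f\<in>E. crossing e f \<longrightarrow> crossing_closed_pair n E e f)"

definition upper_crossing_closed ::
  "nat \<Rightarrow> (nat \<times> nat) set \<Rightarrow> (nat \<times> nat \<Rightarrow> nat \<times> nat \<Rightarrow> bool) \<Rightarrow> bool" where
  "upper_crossing_closed n E prec \<longleftrightarrow> crossing_closed n E \<and>
     (\<forall>e\<in>E. \<forall>f\<in>E. crossing e f \<longrightarrow>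
        (\<exists>h \<in> induced_edges E (J_vertices n E e f). prec h e \<and> prec h f))"

definition lex_less :: "nat \<times> nat \<Rightarrow> nat \<times> nat \<Rightarrow> bool" where
  "lex_less e e' \<longleftrightarrow> fst e < fst e' \<or> (fst e = fst e' \<and> snd e < snd e')"

definition colex_less :: "nat \<times> nat \<Rightarrow> nat \<times> nat \<Rightarrow> bool" where
  "colex_less e e' \<longleftrightarrow> snd e < snd e' \<or> (snd e = snd e' \<and> fst e < fst e')"

end

theory Submission
  imports Defs
begin

lemma cut1:
  assumes "(u,v) \<in> (R \<union> R\<inverse>)\<^sup>*" "u \<in> A" "v \<notin> A"
  shows "\<exists>x y. x\<in>A \<and> y\<notin>A \<and> ((x,y)\<in>R \<or> (y,x)\<in>R)"
  using assms by (induction rule: rtrancl_induct) auto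

lemma cut2:
  assumes "S \<noteq> {}"
    and "\<And>A. A \<subseteq> S \<Longrightarrow> A \<noteq> {} \<Longrightarrow> S - A \<noteq> {} \<Longrightarrow>
      \<exists>x\<in>A. \<exists>y\<in>S-A. (x,y)\<in>induced_edges E S \<or> (y,x) \<in> induced_edges E S"
  shows "connected_induced E S"
  unfolding connected_induced_def
proof (intro conjI ballI)
  show "S \<noteq> {}" by fact
  fix u v assume u: "u \<in> S" and v: "v \<in> S"
  let ?R = "(induced_edges E S \<union> (induced_edges E S)\<inverse>)\<^sup>*"
  define A where "A = {z\<in>S. (u,z) \<in> ?R}"
  show "(u,v) \<in> ?R"
  proof (rule ccontr)
    assume nv: "(u,v) \<notin> ?R"
    have "A \<subseteq> S" "u \<in> A" "v \<in> S - A" using u v nv by (auto simp: A_def)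
    then obtain x y where x: "x \<in> A" and y: "y \<in> S - A"
      and xy: "(x,y)\<in>induced_edges E S \<or> (y,x) \<in> induced_edges E S"
      using assms(2)[of A] by blast
    have "(u,x) \<in> ?R" using x by (auto simp: A_def)
    hence "(u,y) \<in> ?R" using xy by (meson UnI1 UnI2 converseI rtrancl.rtrancl_into_rtrancl)
    thus False using y by (auto simp: A_def)
  qed
qed

lemma remove_max:
  assumes g: "graph_on n E" and pl: "perfectly_labeled E"
    and fin: "finite S" and c: "connected_induced E S"
    and ne: "S - {Max S} \<noteq> {}"
  shows "connected_induced E (S - {Max S})"
proof (rule cut2[OF ne])
  let ?m = "Max S"
  let ?S = "S - {Max S}"
  fix A assume A: "A \<subseteq> ?S" "A \<noteq> {}" "?S - A \<noteq> {}"
  show "\<exists>x\<in>A. \<exists>y\<in>?S-A. (x,y)\<in>induced_edges E ?S \<or> (y,x) \<in> induced_edges E ?S"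
  proof (rule ccontr)
    assume no: "\<not> ?thesis"
    have conn: "\<And>p q. p \<in> S \<Longrightarrow> q \<in> S \<Longrightarrow>
       (p,q) \<in> (induced_edges E S \<union> (induced_edges E S)\<inverse>)\<^sup>*"
      using c unfolding connected_induced_def by blast
    obtain a where a: "a \<in> A" using A by blast
    obtain b where b: "b \<in> ?S - A" using A by blast
    have aS: "a \<in> S" "a \<noteq> ?m" and bS: "b \<in> S" "b \<noteq> ?m" using a b A by auto
    have lem: "\<exists>x\<in>B. (x,?m) \<in> E" if B: "B \<subseteq> ?S" "p \<in> B" "q \<in> ?S - B"
      and noB: "\<not>(\<exists>x\<in>B. \<exists>y\<in>?S-B. (x,y)\<in>induced_edges E ?S \<or> (y,x) \<in> induced_edges E ?S)"
      for B p q
    proof -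
      have "p \<in> S" "q \<in> S" using B by auto
      from cut1[OF conn[OF this] B(2)] B(3)
      obtain x y where xy: "x \<in> B" "y \<notin> B"
        "(x,y)\<in>induced_edges E S \<or> (y,x)\<in>induced_edges E S" by blast
      have yS: "y \<in> S" using xy(3) by (auto simp: induced_edges_def)
      show ?thesis
      proof (cases "y = ?m")
        case True
        have xm: "x \<noteq> ?m" "x \<in> S" using xy B by auto
        have "x \<le> ?m" using fin xm by simp
        moreover have "(?m,x) \<notin> E"
        proof
          assume "(?m,x) \<in> E"
          hence "?m < x" using g by (auto simp: graph_on_def)
          thus False using \<open>x \<le> ?m\<close> by simp
        qed
        ultimately show ?thesis using xy True by (auto simp: induced_edges_def)
      next
        case False
        hence "y \<in> ?S - B" using yS xy by auto
        moreover have "x \<in> ?S" using xy B by auto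
        ultimately have "(x,y)\<in>induced_edges E ?S \<or> (y,x)\<in>induced_edges E ?S"
          using xy(3) by (auto simp: induced_edges_def)
        hence False using noB xy(1) \<open>y \<in> ?S - B\<close> by blast
        thus ?thesis ..
      qed
    qed
    obtain x where x: "x \<in> A" "(x,?m) \<in> E" using lem[OF A(1) a b] no by blast
    have no2: "\<not>(\<exists>x\<in>?S - A. \<exists>y\<in>?S-(?S - A). (x,y)\<in>induced_edges E ?S \<or> (y,x) \<in> induced_edges E ?S)"
      using no A(1) by blast
    obtain x' where x': "x' \<in> ?S - A" "(x',?m) \<in> E"
      using lem[of "?S - A" b a] no2 a b A(1) by blast
    have lt: "x < ?m" "x' < ?m" using x x' g by (auto simp: graph_on_def)
    have "x \<noteq> x'" using x x' by auto
    have plr: "\<And>i j k. (i,k)\<in>E \<Longrightarrow> (j,k)\<in>E \<Longrightarrow> i<j \<Longrightarrow> j<k \<Longrightarrow> (i,j)\<in>E"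
      using pl unfolding perfectly_labeled_def by blast
    have inS: "x \<in> ?S" "x' \<in> ?S" using x x' A by auto
    have "(x,x') \<in> E \<or> (x',x) \<in> E"
    proof (cases "x < x'")
      case True thus ?thesis using plr[OF x(2) x'(2) True lt(2)] by blast
    next
      case False hence "x' < x" using \<open>x \<noteq> x'\<close> by simp
      thus ?thesis using plr[OF x'(2) x(2) _ lt(1)] by blast
    qed
    hence "(x,x') \<in> induced_edges E ?S \<or> (x',x) \<in> induced_edges E ?S"
      using inS unfolding induced_edges_def by blast
    thus False using no x(1) x'(1) by blast
  qed
qed

lemma down_conn_aux:
  assumes g: "graph_on n E" and pl: "perfectly_labeled E"
  shows "\<And>S. card {x\<in>S. x > t} = k \<Longrightarrow> finite S \<Longrightarrow> connected_induced E S \<Longrightarrow>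
     S \<inter> {..t} \<noteq> {} \<Longrightarrow> connected_induced E (S \<inter> {..t})"
proof (induction k)
  case 0
  hence "{x\<in>S. x > t} = {}" by simp
  hence "S \<inter> {..t} = S" by auto
  thus ?case using 0 by simp
next
  case (Suc k)
  have ne: "S \<noteq> {}" using Suc.prems by auto
  have "{x\<in>S. x > t} \<noteq> {}" using Suc.prems(1) by (metis card.empty Zero_not_Suc)
  then obtain z where z: "z \<in> S" "z > t" by auto
  have mS: "Max S \<in> S" using Suc.prems ne by simp
  have "z \<le> Max S" using Suc.prems z by simp
  hence mt: "Max S > t" using z by simp
  have eq: "(S - {Max S}) \<inter> {..t} = S \<inter> {..t}" using mt by auto
  have "card {x\<in>S - {Max S}. x > t} = card ({x\<in>S. x > t} - {Max S})"
    by (rule arg_cong[where f=card]) auto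
  also have "\<dots> = k" using Suc.prems(1) mS mt by (simp add: Suc.prems(2))
  finally have ck: "card {x\<in>S - {Max S}. x > t} = k" .
  have "S - {Max S} \<noteq> {}" using Suc.prems(4) mt by auto
  hence "connected_induced E (S - {Max S})"
    using remove_max[OF g pl Suc.prems(2) Suc.prems(3)] by simp
  from Suc.IH[OF ck _ this] Suc.prems(2,4) eq show ?case by simp
qed

lemma down_neighbor:
  assumes g: "graph_on n E" and pl: "perfectly_labeled E"
    and fin: "finite S" and c: "connected_induced E S"
    and u: "u \<in> S" and w: "w \<in> S" and uw: "u < w"
  shows "\<exists>h \<in> induced_edges E S. snd h \<le> w \<and> fst h \<le> u"
proof -
  let ?D = "S \<inter> {..w}"
  have "?D \<noteq> {}" using u uw by auto
  hence cD: "connected_induced E ?D"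
    using down_conn_aux[where t=w, OF g pl refl fin c] by blast
  have "(u,w) \<in> (induced_edges E ?D \<union> (induced_edges E ?D)\<inverse>)\<^sup>*"
    using cD u w uw unfolding connected_induced_def by auto
  from cut1[OF this, of "{u}"] uw obtain y where
    y: "(u,y)\<in>induced_edges E ?D \<or> (y,u)\<in>induced_edges E ?D" by auto
  show ?thesis
  proof (cases "(u,y)\<in>induced_edges E ?D")
    case True thus ?thesis by (intro bexI[of _ "(u,y)"]) (auto simp: induced_edges_def)
  next
    case False
    hence yu: "(y,u)\<in>induced_edges E ?D" using y by auto
    hence "y < u" using g by (auto simp: induced_edges_def graph_on_def)
    thus ?thesis using yu uw by (intro bexI[of _ "(y,u)"]) (auto simp: induced_edges_def)
  qed
qed

theorem proposition5p12:
  fixes n :: nat and E :: "(nat \<times> nat) set"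
  assumes "graph_on n E"
    and "perfectly_labeled E"
    and "crossing_closed n E"
  shows "upper_crossing_closed n E colex_less \<and> upper_crossing_closed n E lex_less"
proof -
  have key: "\<exists>h \<in> induced_edges E (J_vertices n E e f). colex_less h e \<and> colex_less h f
      \<and> lex_less h e \<and> lex_less h f"
    if e: "e \<in> E" and f: "f \<in> E" and cr: "crossing e f" for e f
  proof -
    have "crossing_closed_pair n E e f" using assms(3) e f cr by (auto simp: crossing_closed_def)
    hence "minimal_admissible n E e f (J_vertices n E e f)"
      unfolding crossing_closed_pair_def J_vertices_def by (rule theI')
    hence adm: "admissible n E e f (J_vertices n E e f)" by (simp add: minimal_admissible_def)
    let ?J = "J_vertices n E e f"
    have fin: "finite ?J" using adm unfolding admissible_def by (meson finite_atLeastAtMost finite_subset)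
    have c: "connected_induced E ?J" using adm by (simp add: admissible_def)
    obtain u w where uw: "u \<in> ?J" "w \<in> ?J" "u < w" "u \<le> fst e" "u \<le> fst f"
      "w < snd e" "w < snd f"
    proof -
      have "fst e \<in> ?J" "fst f \<in> ?J" using adm by (auto simp: admissible_def)
      thus ?thesis using cr that unfolding crossing_def
        by (elim disjE) (meson less_imp_le order.refl order.strict_trans)+
    qed
    obtain h where h: "h \<in> induced_edges E ?J" "snd h \<le> w" "fst h \<le> u"
      using down_neighbor[OF assms(1,2) fin c uw(1,2,3)] by blast
    show ?thesis using h uw
      by (intro bexI[of _ h]) (auto simp: colex_less_def lex_less_def)
  qed
  show ?thesis using key assms(3) unfolding upper_crossing_closed_def by blast
qed

end
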